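(* Let $\mathcal{M}_R$ be a rule that assigns a probability $\mathcal{M}_R(r;F)\in[0,1]$ to each root $r$ of every forest $F\in\mathcal{F}^N$. Then there is at most one incentive-compatible selection mechanism $\mathcal{M}$ such that $\mathcal{M}(r;F)=\mathcal{M}_R(r;F)$ for every forest $F$ and every root $r$ of $F$.
   Context: Let $N$ be a finite set of vertices. A directed forest on $N$ is a directed acyclic graph on $N$ with every out-degree at most $1$; $\mathcal{F}^N$ is the set of such forests; roots are vertices with no out-edge. A selection mechanism is a function $\mathcal{M}:N\times\mathcal{F}^N\to[0,1]$ with $\sum_x\mathcal{M}(x;F)\le1$ for all $F$. It is incentive-compatible if $\mathcal{M}(x;F)=\mathcal{M}(x;F')$ whenever $F,F'$ differ only in the out-edge of $x$. *)

theory Defs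
  imports Complex_Main
begin

definition forest :: "'a set \<Rightarrow> ('a \<times> 'a) set \<Rightarrow> bool" where
  "forest N F \<longleftrightarrow> F \<subseteq> N \<times> N \<and> acyclic F \<and>
     (\<forall>x y z. (x, y) \<in> F \<longrightarrow> (x, z) \<in> F \<longrightarrow> y = z)"

definition forests :: "'a set \<Rightarrow> ('a \<times> 'a) set set" where
  "forests N = {F. forest N F}"

definition roots :: "'a set \<Rightarrow> ('a \<times> 'a) set \<Rightarrow> 'a set" where
  "roots N F = {x \<in> N. \<forall>y. (x, y) \<notin> F}"

definition selection_mechanism :: "'a set \<Rightarrow> ('a \<Rightarrow> ('a \<times> 'a) set \<Rightarrow> real) \<Rightarrow> bool" where
  "selection_mechanism N M \<longleftrightarrow>
     (\<forall>F \<in> forests N. (\<forall>x \<in> N. 0 \<le> M x F \<and> M x F \<le> 1) \<and> (\<Sum>x\<in>N. M x F) \<le> 1)"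

definition differ_only_at :: "'a \<Rightarrow> ('a \<times> 'a) set \<Rightarrow> ('a \<times> 'a) set \<Rightarrow> bool" where
  "differ_only_at x F F' \<longleftrightarrow> {e \<in> F. fst e \<noteq> x} = {e \<in> F'. fst e \<noteq> x}"

definition incentive_compatible :: "'a set \<Rightarrow> ('a \<Rightarrow> ('a \<times> 'a) set \<Rightarrow> real) \<Rightarrow> bool" where
  "incentive_compatible N M \<longleftrightarrow>
     (\<forall>x \<in> N. \<forall>F \<in> forests N. \<forall>F' \<in> forests N.
        differ_only_at x F F' \<longrightarrow> M x F = M x F')"

end

theory Submission
  imports Defs
begin

theorem corollary1:
  fixes N :: "'a set"
    and MR M1 M2 :: "'a \<Rightarrow> ('a \<times> 'a) set \<Rightarrow> real"
  assumes "finite N"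
    and "\<forall>F \<in> forests N. \<forall>r \<in> roots N F. 0 \<le> MR r F \<and> MR r F \<le> 1"
    and "selection_mechanism N M1" and "incentive_compatible N M1"
    and "\<forall>F \<in> forests N. \<forall>r \<in> roots N F. M1 r F = MR r F"
    and "selection_mechanism N M2" and "incentive_compatible N M2"
    and "\<forall>F \<in> forests N. \<forall>r \<in> roots N F. M2 r F = MR r F"
  shows "\<forall>F \<in> forests N. \<forall>x \<in> N. M1 x F = M2 x F"
proof (intro ballI)
  fix F x assume F: "F \<in> forests N" and x: "x \<in> N"
  define F' where "F' = {e \<in> F. fst e \<noteq> x}"
  have sub: "F' \<subseteq> F" unfolding F'_def by auto
  have F'f: "F' \<in> forests N"
    using F sub acyclic_subset[of F F'] unfolding forests_def forest_def by blast
  have r: "x \<in> roots N F'" using x unfolding roots_def F'_def by auto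
  have d: "differ_only_at x F F'" unfolding differ_only_at_def F'_def by auto
  have "M1 x F = M1 x F'" using assms(4) x F F'f d unfolding incentive_compatible_def by blast
  also have "\<dots> = MR x F'" using assms(5) F'f r by blast
  also have "\<dots> = M2 x F'" using assms(8) F'f r by simp
  also have "\<dots> = M2 x F" using assms(7) x F F'f d unfolding incentive_compatible_def by metis
  finally show "M1 x F = M2 x F" .
qed

end
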